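(* Let $r\ge 2$, let $x_1,\dots,x_{r-1},t\in\mathbb{C}$, and let $G$ be a finite graph (loops and multiple edges allowed) with $n$ vertices, each of degree at least $1$. Let $V=\mathbb{C}^r$, $B=I_r$ (so $B_{ij}=\delta_{ij}$), and let $\mathcal{A}=\{A_1,A_2,\dots\}$ be the symmetric tensors with components $A_1^i=t$ if $i=r$ and $A_1^i=0$ if $i\neq r$, and for $d\ge 2$ $$A_d^{i_1\dots i_d}=\begin{cases} x_i & \text{if } (i_1,\dots,i_d) \text{ is a permutation of } (i,i,r,\dots,r) \text{ for some } i\in\{1,\dots,r-1\},\\ t & \text{if } (i_1,\dots,i_d)=(r,\dots,r),\\ 0&\text{otherwise.}\end{cases}$$ Then $$\mathcal{F}_{\mathcal{A},I_r}(G)=\sum_{|\lambda|\le n} t^{\,n-|\lambda|}\,p_\lambda(x_1,\dots,x_{r-1})\,N_\lambda(G),$$ the sum being over all partitions $\lambda$ (including the empty partition) of weight $|\lambda|\le n$.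
   Context: Graph function: for $G$ with vertices $v_1,\dots,v_n$ of degrees $d_1,\dots,d_n$ and set of half-edges $H$ (each edge, including a loop, consists of two half-edges), $\mathcal{F}_{\mathcal{A},B}(G)=\sum_{c:H\to\{1,\dots,r\}}\prod_{\{h,h'\}\in E(G)}B_{c(h)c(h')}\prod_{k=1}^n A_{d_k}^{c(h_{k,1})\dots c(h_{k,d_k})}$, where $h_{k,1},\dots,h_{k,d_k}$ are the half-edges at $v_k$; i.e. a copy of $A_{d_k}$ is placed at each vertex and contracted along every edge with $B$. A (multi)cycle of $G$ is a $2$-valent subgraph $C$ (every vertex of $C$ has degree $2$ in $C$, loops counted twice; $C$ need not be connected; the empty subgraph is allowed). Its length $|C|$ is its number of edges; if $C_1,\dots,C_l$ are its connected components, its type is the partition $\lambda_C=[|C_1|,\dots,|C_l|]$ of $|C|$. $N_\lambda(G)$ is the number of cycles of $G$ of type $\lambda$. For $k\ge1$, $p_k(x_1,\dots,x_{r-1})=\sum_i x_i^k$, and for a partition $\lambda=[k_1,\dots,k_l]$, $p_\lambda=\prod_{j=1}^l p_{k_j}$ (with $p_\emptyset=1$); $|\lambda|=k_1+\dots+k_l$. *)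

theory Defs
  imports Complex_Main "HOL-Library.Multiset" "HOL-Library.Product_Lexorder" "HOL-Library.FuncSet"
begin

text \<open>Each edge e has two half-edges (e,False) and (e,True), attached to fst (ends e) and
snd (ends e) respectively; a loop thus contributes two half-edges at its vertex.\<close>

definition half_edges :: "'e set \<Rightarrow> ('e \<times> bool) set" where
  "half_edges E = E \<times> UNIV"

definition hvert :: "('e \<Rightarrow> 'v \<times> 'v) \<Rightarrow> 'e \<times> bool \<Rightarrow> 'v" where
  "hvert ends h = (if snd h then snd (ends (fst h)) else fst (ends (fst h)))"

definition halfs_at :: "'e set \<Rightarrow> ('e \<Rightarrow> 'v \<times> 'v) \<Rightarrow> 'v \<Rightarrow> ('e \<times> bool) set" where
  "halfs_at E ends v = {h \<in> half_edges E. hvert ends h = v}"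

definition deg :: "'e set \<Rightarrow> ('e \<Rightarrow> 'v \<times> 'v) \<Rightarrow> 'v \<Rightarrow> nat" where
  "deg E ends v = card (halfs_at E ends v)"

definition multigraph :: "'v set \<Rightarrow> 'e set \<Rightarrow> ('e \<Rightarrow> 'v \<times> 'v) \<Rightarrow> bool" where
  "multigraph V E ends \<longleftrightarrow> finite V \<and> finite E \<and>
     (\<forall>e\<in>E. fst (ends e) \<in> V \<and> snd (ends e) \<in> V)"

text \<open>Graph function: colours 1..r on half-edges; A d is the order-d tensor, given as a
function of the list of its d indices (indices of half-edges at a vertex listed in a fixed
order; the tensors considered are symmetric); B is the edge matrix.\<close>

definition graph_fun ::
  "nat \<Rightarrow> (nat \<Rightarrow> nat list \<Rightarrow> complex) \<Rightarrow> (nat \<Rightarrow> nat \<Rightarrow> complex)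
   \<Rightarrow> 'v set \<Rightarrow> ('e::linorder) set \<Rightarrow> ('e \<Rightarrow> 'v \<times> 'v) \<Rightarrow> complex" where
  "graph_fun r A B V E ends =
     (\<Sum>c \<in> Pi\<^sub>E (half_edges E) (\<lambda>_. {1..r}).
        (\<Prod>e\<in>E. B (c (e, False)) (c (e, True))) *
        (\<Prod>v\<in>V. A (deg E ends v) (map c (sorted_list_of_set (halfs_at E ends v)))))"

definition thmA :: "nat \<Rightarrow> (nat \<Rightarrow> complex) \<Rightarrow> complex \<Rightarrow> nat \<Rightarrow> nat list \<Rightarrow> complex" where
  "thmA r x t d is =
     (if d = 1 then (if is = [r] then t else 0)
      else if (\<exists>i\<in>{1..<r}. length is = d \<and> mset is = {#i, i#} + replicate_mset (d - 2) r)
        then x (SOME i. i \<in> {1..<r} \<and> mset is = {#i, i#} + replicate_mset (d - 2) r)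
      else if is = replicate d r then t
      else 0)"

definition identity_mat :: "nat \<Rightarrow> nat \<Rightarrow> complex" where
  "identity_mat i j = (if i = j then 1 else 0)"

text \<open>Cycles: edge sets S \<subseteq> E in which every vertex has degree 0 or 2 (the 2-valent
subgraph is determined by its edges, as it has no isolated vertices).\<close>

definition is_cycle :: "'e set \<Rightarrow> ('e \<Rightarrow> 'v \<times> 'v) \<Rightarrow> 'e set \<Rightarrow> bool" where
  "is_cycle E ends S \<longleftrightarrow> S \<subseteq> E \<and> (\<forall>v. deg S ends v = 0 \<or> deg S ends v = 2)"

definition edge_adj :: "('e \<Rightarrow> 'v \<times> 'v) \<Rightarrow> 'e set \<Rightarrow> ('e \<times> 'e) set" where
  "edge_adj ends S = {(e, f). e \<in> S \<and> f \<in> S \<and> (\<exists>a b. hvert ends (e, a) = hvert ends (f, b))}"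

definition components :: "('e \<Rightarrow> 'v \<times> 'v) \<Rightarrow> 'e set \<Rightarrow> 'e set set" where
  "components ends S = S // ((edge_adj ends S)\<^sup>+)"

definition cycle_type :: "('e \<Rightarrow> 'v \<times> 'v) \<Rightarrow> 'e set \<Rightarrow> nat multiset" where
  "cycle_type ends S = image_mset card (mset_set (components ends S))"

definition N_count :: "'e set \<Rightarrow> ('e \<Rightarrow> 'v \<times> 'v) \<Rightarrow> nat multiset \<Rightarrow> nat" where
  "N_count E ends lam = card {S. is_cycle E ends S \<and> cycle_type ends S = lam}"

definition power_sum :: "nat \<Rightarrow> (nat \<Rightarrow> complex) \<Rightarrow> nat \<Rightarrow> complex" where
  "power_sum r x k = (\<Sum>i\<in>{1..<r}. x i ^ k)"

definition power_sum_part :: "nat \<Rightarrow> (nat \<Rightarrow> complex) \<Rightarrow> nat multiset \<Rightarrow> complex" where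
  "power_sum_part r x lam = (\<Prod>k\<in>#lam. power_sum r x k)"

definition partitions_upto :: "nat \<Rightarrow> nat multiset set" where
  "partitions_upto n = {lam. 0 \<notin># lam \<and> sum_mset lam \<le> n}"

end

theory Submission
  imports Defs
begin


definition verts :: "('e \<Rightarrow> 'v \<times> 'v) \<Rightarrow> 'e set \<Rightarrow> 'v set" where
  "verts ends S = hvert ends ` half_edges S"

lemma finite_half_edges[simp]: "finite S \<Longrightarrow> finite (half_edges S)"
  by (simp add: half_edges_def)

lemma card_half_edges: "finite S \<Longrightarrow> card (half_edges S) = 2 * card S"
  by (simp add: half_edges_def card_cartesian_product)

lemma halfs_at_sub: "halfs_at S ends v \<subseteq> half_edges S"
  by (auto simp: halfs_at_def)

lemma finite_halfs_at[simp]: "finite S \<Longrightarrow> finite (halfs_at S ends v)"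
  using halfs_at_sub finite_half_edges finite_subset by metis

lemma mem_half_edges[simp]: "(h \<in> half_edges S) = (fst h \<in> S)"
  by (cases h) (auto simp: half_edges_def)

lemma mem_halfs_at: "(h \<in> halfs_at S ends v) = (fst h \<in> S \<and> hvert ends h = v)"
  by (auto simp: halfs_at_def)

lemma edge_adj_refl: "e \<in> S \<Longrightarrow> (e, e) \<in> edge_adj ends S"
  by (auto simp: edge_adj_def)

lemma equiv_adj: "equiv S ((edge_adj ends S)\<^sup>+)"
proof (rule equivI)
  have sub: "edge_adj ends S \<subseteq> S \<times> S" by (auto simp: edge_adj_def)
  hence "(edge_adj ends S)\<^sup>+ \<subseteq> S \<times> S" using trancl_subset_Sigma by blast
  then show "refl_on S ((edge_adj ends S)\<^sup>+)"
    by (auto simp: refl_on_def intro!: r_into_trancl edge_adj_refl)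
  have "sym (edge_adj ends S)" unfolding sym_def edge_adj_def by (auto, metis)
  then show "sym ((edge_adj ends S)\<^sup>+)" by (rule sym_trancl)
  show "trans ((edge_adj ends S)\<^sup>+)" by (rule trans_trancl)
  show "(edge_adj ends S)\<^sup>+ \<subseteq> S \<times> S" by fact
qed

lemma deg_verts: "finite S \<Longrightarrow> v \<in> verts ends S \<Longrightarrow> deg S ends v > 0"
proof -
  assume a: "finite S" "v \<in> verts ends S"
  then obtain h where "fst h \<in> S" "hvert ends h = v" by (auto simp: verts_def)
  hence "h \<in> halfs_at S ends v" by (simp add: mem_halfs_at)
  thus ?thesis using a unfolding deg_def card_gt_0_iff by auto
qed

lemma deg_not_verts: "v \<notin> verts ends S \<Longrightarrow> deg S ends v = 0"
proof -
  assume "v \<notin> verts ends S"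
  hence "halfs_at S ends v = {}" by (auto simp: verts_def mem_halfs_at)
  thus ?thesis by (simp add: deg_def)
qed

lemma degree_count:
  assumes "finite S" "\<And>v. v \<in> verts ends S \<Longrightarrow> deg S ends v = 2"
  shows "card (verts ends S) = card S"
proof -
  have fv: "finite (verts ends S)" using assms(1) by (simp add: verts_def)
  have "half_edges S = (\<Union>v\<in>verts ends S. halfs_at S ends v)"
    by (auto simp: verts_def halfs_at_def)
  hence "card (half_edges S) = card (\<Union>v\<in>verts ends S. halfs_at S ends v)" by simp
  also have "\<dots> = (\<Sum>v\<in>verts ends S. card (halfs_at S ends v))"
    using fv assms(1) by (subst card_UN_disjoint) (auto simp: mem_halfs_at)
  also have "\<dots> = (\<Sum>v\<in>verts ends S. 2)" using assms(2) by (simp add: deg_def)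
  finally show ?thesis using card_half_edges[OF assms(1)] by simp
qed


lemma comps_finite: "finite S \<Longrightarrow> finite (components ends S)"
  unfolding components_def
  by (rule finite_quotient) (use equiv_adj[of S ends] in \<open>auto simp: equiv_def refl_on_def\<close>)

lemma comps_Union: "\<Union> (components ends S) = S"
  unfolding components_def using equiv_adj by (rule Union_quotient)

lemma comps_disj: "C \<in> components ends S \<Longrightarrow> C' \<in> components ends S \<Longrightarrow> C \<noteq> C' \<Longrightarrow> C \<inter> C' = {}"
  unfolding components_def using equiv_adj quotient_disj by metis

lemma comps_nonempty: "C \<in> components ends S \<Longrightarrow> C \<noteq> {}"
  unfolding components_def by (rule in_quotient_imp_non_empty[OF equiv_adj])

lemma comps_sub: "C \<in> components ends S \<Longrightarrow> C \<subseteq> S"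
  using comps_Union[of ends S] Union_upper[of C "components ends S"] by simp

lemma comp_of_in: "e \<in> S \<Longrightarrow> (edge_adj ends S)\<^sup>+ `` {e} \<in> components ends S"
  unfolding components_def by (metis quotientI)

lemma comp_of_mem: "e \<in> S \<Longrightarrow> e \<in> (edge_adj ends S)\<^sup>+ `` {e}"
  using equiv_adj[of S ends] by (meson equiv_class_self)

lemma comp_eq: "C \<in> components ends S \<Longrightarrow> e \<in> C \<Longrightarrow> C = (edge_adj ends S)\<^sup>+ `` {e}"
proof -
  assume "C \<in> components ends S" "e \<in> C"
  then obtain a where "C = (edge_adj ends S)\<^sup>+ `` {a}" "(a, e) \<in> (edge_adj ends S)\<^sup>+"
    unfolding components_def by (auto elim!: quotientE)
  thus ?thesis using equiv_class_eq[OF equiv_adj] by metis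
qed

lemma comp_adj: "C \<in> components ends S \<Longrightarrow> e \<in> C \<Longrightarrow> (e, e') \<in> edge_adj ends S \<Longrightarrow> e' \<in> C"
  using comp_eq[of C ends S e]
  by (metis (no_types, lifting) Image_singleton_iff r_into_trancl trancl_trans)

lemma comp_halfs:
  assumes "C \<in> components ends S" "h \<in> halfs_at S ends v" "fst h \<in> C" "h' \<in> halfs_at S ends v"
  shows "fst h' \<in> C"
proof -
  have "(fst h, fst h') \<in> edge_adj ends S"
    using assms(2,4) unfolding edge_adj_def mem_halfs_at
    by (cases h, cases h') (auto, metis)
  thus ?thesis using comp_adj assms(1,3) by metis
qed

lemma comp_halfs_eq:
  assumes "C \<in> components ends S" "v \<in> verts ends C"
  shows "halfs_at C ends v = halfs_at S ends v"
proof -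
  obtain h where h: "fst h \<in> C" "hvert ends h = v" using assms(2) by (auto simp: verts_def)
  have hS: "h \<in> halfs_at S ends v" using h comps_sub[OF assms(1)] by (auto simp: mem_halfs_at)
  show ?thesis
    using comp_halfs[OF assms(1) hS h(1)] comps_sub[OF assms(1)] by (auto simp: mem_halfs_at)
qed

lemma comp_verts_disj:
  assumes "C \<in> components ends S" "C' \<in> components ends S" "C \<noteq> C'"
  shows "verts ends C \<inter> verts ends C' = {}"
proof (rule ccontr)
  assume "verts ends C \<inter> verts ends C' \<noteq> {}"
  then obtain v where v: "v \<in> verts ends C" "v \<in> verts ends C'" by blast
  obtain h where h: "fst h \<in> C" "hvert ends h = v" using v(1) by (auto simp: verts_def)
  obtain h' where h': "fst h' \<in> C'" "hvert ends h' = v" using v(2) by (auto simp: verts_def)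
  have "h \<in> halfs_at S ends v" "h' \<in> halfs_at S ends v"
    using h h' comps_sub[OF assms(1)] comps_sub[OF assms(2)] by (auto simp: mem_halfs_at)
  hence "fst h' \<in> C" using comp_halfs[OF assms(1)] h by blast
  thus False using comps_disj[OF assms] h'(1) by blast
qed

lemma verts_Union: "verts ends S = (\<Union>C\<in>components ends S. verts ends C)"
proof -
  have "half_edges S = (\<Union>C\<in>components ends S. half_edges C)"
    using comps_Union[of ends S] by (auto simp: half_edges_def)
  thus ?thesis unfolding verts_def by (simp add: image_UN)
qed

lemma comp_cycle_count:
  assumes "is_cycle E ends S" "finite S" "C \<in> components ends S"
  shows "card (verts ends C) = card C"
proof (rule degree_count)
  show "finite C" using assms comps_sub finite_subset by metis
  fix v assume v: "v \<in> verts ends C"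
  have "deg C ends v > 0" using deg_verts[OF \<open>finite C\<close> v] .
  moreover have "deg C ends v = deg S ends v" using comp_halfs_eq[OF assms(3) v] by (simp add: deg_def)
  moreover have "deg S ends v = 0 \<or> deg S ends v = 2" using assms(1) unfolding is_cycle_def by blast
  ultimately show "deg C ends v = 2" by linarith
qed

lemma cycle_card_verts:
  assumes "is_cycle E ends S" "finite S"
  shows "card (verts ends S) = card S"
proof (rule degree_count[OF assms(2)])
  fix v assume v: "v \<in> verts ends S"
  have "deg S ends v = 0 \<or> deg S ends v = 2" using assms(1) unfolding is_cycle_def by blast
  thus "deg S ends v = 2" using deg_verts[OF assms(2) v] by linarith
qed

lemma type_sum: "finite S \<Longrightarrow> sum_mset (cycle_type ends S) = card S"
proof -
  assume f: "finite S"
  have "sum_mset (cycle_type ends S) = (\<Sum>C\<in>components ends S. card C)"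
    by (simp add: cycle_type_def sum_unfold_sum_mset)
  also have "\<dots> = card (\<Union> (components ends S))"
  proof (rule card_Union_disjoint[symmetric])
    show "pairwise disjnt (components ends S)"
      unfolding pairwise_def disjnt_def using comps_disj by metis
    show "\<And>C. C \<in> components ends S \<Longrightarrow> finite C" using f comps_sub finite_subset by metis
  qed
  finally show ?thesis by (simp add: comps_Union)
qed

lemma type_pos: "finite S \<Longrightarrow> 0 \<notin># cycle_type ends S"
proof
  assume f: "finite S" and "0 \<in># cycle_type ends S"
  then obtain C where C: "C \<in> components ends S" "card C = 0"
    unfolding cycle_type_def using comps_finite[OF f, of ends] by auto
  have "finite C" using f comps_sub[OF C(1)] finite_subset by metis
  thus False using C comps_nonempty by auto
qed

lemma type_psp: "finite S \<Longrightarrow>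
  power_sum_part r x (cycle_type ends S) = (\<Prod>C\<in>components ends S. power_sum r x (card C))"
  by (simp add: power_sum_part_def cycle_type_def prod_unfold_prod_mset image_mset.compositionality comp_def)



lemma thmA_rep:
  assumes "is = replicate d r" "d \<ge> 1" "r \<ge> 2"
  shows "thmA r x t d is = t"
proof -
  have "\<not> (\<exists>i\<in>{1..<r}. length is = d \<and> mset is = {#i, i#} + replicate_mset (d - 2) r)"
  proof
    assume "\<exists>i\<in>{1..<r}. length is = d \<and> mset is = {#i, i#} + replicate_mset (d - 2) r"
    then obtain i where i: "i \<in> {1..<r}" "mset is = {#i, i#} + replicate_mset (d - 2) r" by blast
    hence "count (mset is) i = count ({#i, i#} + replicate_mset (d - 2) r) i" by simp
    thus False using i(1) assms(1) by auto
  qed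
  thus ?thesis using assms unfolding thmA_def by auto
qed

lemma thmA_pair:
  assumes "length is = d" "mset is = {#i, i#} + replicate_mset (d - 2) r" "i \<in> {1..<r}"
  shows "thmA r x t d is = x i"
proof -
  have "size (mset is) = d" using assms(1) by simp
  hence d2: "d \<ge> 2" using assms(2) by simp
  have "(SOME j. j \<in> {1..<r} \<and> mset is = {#j, j#} + replicate_mset (d - 2) r) = i"
  proof (rule some_equality)
    show "i \<in> {1..<r} \<and> mset is = {#i, i#} + replicate_mset (d - 2) r" using assms by simp
    fix j assume j: "j \<in> {1..<r} \<and> mset is = {#j, j#} + replicate_mset (d - 2) r"
    hence "count ({#j, j#} + replicate_mset (d - 2) r) j = count ({#i, i#} + replicate_mset (d - 2) r) j"
      using assms(2) by simp
    thus "j = i" using j by (auto split: if_splits)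
  qed
  thus ?thesis using assms d2 unfolding thmA_def by auto
qed

lemma thmA_nz:
  assumes "thmA r x t d is \<noteq> 0" "length is = d"
  shows "is = replicate d r \<or> (\<exists>i\<in>{1..<r}. mset is = {#i, i#} + replicate_mset (d - 2) r)"
  using assms unfolding thmA_def by (auto split: if_splits)


definition lst :: "'e::linorder set \<Rightarrow> ('e \<Rightarrow> 'v \<times> 'v) \<Rightarrow> ('e \<Rightarrow> nat) \<Rightarrow> 'v \<Rightarrow> nat list" where
  "lst E ends f v = map (\<lambda>h. f (fst h)) (sorted_list_of_set (halfs_at E ends v))"

lemma mset_sorted_set: "mset (sorted_list_of_set A) = mset_set A"
  by (metis mset_sorted_list_of_multiset sorted_list_of_mset_set)

lemma mset_lst: "mset (lst E ends f v) = image_mset (\<lambda>h. f (fst h)) (mset_set (halfs_at E ends v))"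
  by (simp add: lst_def mset_sorted_set)

lemma length_lst: "finite E \<Longrightarrow> length (lst E ends f v) = deg E ends v"
  by (simp add: lst_def deg_def)

lemma vertex_nz:
  assumes "finite E" "thmA r x t (deg E ends v) (lst E ends f v) \<noteq> 0"
  defines "K \<equiv> {h \<in> halfs_at E ends v. f (fst h) \<noteq> r}"
  shows "K = {} \<or> (\<exists>i\<in>{1..<r}. card K = 2 \<and> (\<forall>h\<in>K. f (fst h) = i))"
proof -
  have fK: "finite K" using assms(1) by (simp add: K_def)
  have filt: "filter_mset (\<lambda>y. y \<noteq> r) (mset (lst E ends f v)) = image_mset (\<lambda>h. f (fst h)) (mset_set K)"
    using assms(1) by (simp add: mset_lst filter_mset_image_mset K_def)
  from thmA_nz[OF assms(2) length_lst[OF assms(1)]]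
  show ?thesis
  proof
    assume "lst E ends f v = replicate (deg E ends v) r"
    hence "filter_mset (\<lambda>y. y \<noteq> r) (mset (lst E ends f v)) = {#}" by simp
    hence "mset_set K = {#}" using filt by simp
    thus ?thesis using fK by (simp add: mset_set_empty_iff)
  next
    assume "\<exists>i\<in>{1..<r}. mset (lst E ends f v) = {#i, i#} + replicate_mset (deg E ends v - 2) r"
    then obtain i where i: "i \<in> {1..<r}" "mset (lst E ends f v) = {#i, i#} + replicate_mset (deg E ends v - 2) r"
      by blast
    hence "filter_mset (\<lambda>y. y \<noteq> r) (mset (lst E ends f v)) = {#i, i#}" by simp
    hence im: "image_mset (\<lambda>h. f (fst h)) (mset_set K) = {#i, i#}" using filt by simp
    have "size (mset_set K) = size (image_mset (\<lambda>h. f (fst h)) (mset_set K))" by simp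
    also have "\<dots> = 2" using im by simp
    finally have "size (mset_set K) = 2" .
    hence "card K = 2" by simp
    moreover have "\<forall>h\<in>K. f (fst h) = i"
    proof
      fix h assume "h \<in> K"
      hence "f (fst h) \<in># image_mset (\<lambda>h. f (fst h)) (mset_set K)" using fK by simp
      thus "f (fst h) = i" using im by simp
    qed
    ultimately show ?thesis using i(1) by blast
  qed
qed

lemma vertex_zero:
  assumes "finite E" "deg E ends v \<ge> 1" "r \<ge> 2"
    "\<And>h. h \<in> halfs_at E ends v \<Longrightarrow> f (fst h) = r"
  shows "thmA r x t (deg E ends v) (lst E ends f v) = t"
proof (rule thmA_rep[OF _ assms(2,3)])
  have "\<forall>y\<in>set (lst E ends f v). y = r" using assms(1,4) by (auto simp: lst_def)
  thus "lst E ends f v = replicate (deg E ends v) r"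
    using replicate_length_same length_lst[OF assms(1)] by metis
qed

lemma vertex_two:
  assumes "finite E" "i \<in> {1..<r}"
    "card {h \<in> halfs_at E ends v. f (fst h) \<noteq> r} = 2"
    "\<And>h. h \<in> halfs_at E ends v \<Longrightarrow> f (fst h) \<noteq> r \<Longrightarrow> f (fst h) = i"
  shows "thmA r x t (deg E ends v) (lst E ends f v) = x i"
proof (rule thmA_pair[OF length_lst[OF assms(1)] _ assms(2)])
  define H where "H = halfs_at E ends v"
  define K where "K = {h \<in> H. f (fst h) \<noteq> r}"
  have fH: "finite H" using assms(1) by (simp add: H_def)
  have KH: "K \<subseteq> H" by (auto simp: K_def)
  have fK: "finite K" using fH KH finite_subset by metis
  have cK: "card K = 2" using assms(3) by (simp add: K_def H_def)
  have "H = K \<union> (H - K)" using KH by blast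
  hence "mset_set H = mset_set K + mset_set (H - K)"
    using fH fK mset_set_Union[of K "H - K"] by simp
  hence "image_mset (\<lambda>h. f (fst h)) (mset_set H)
       = image_mset (\<lambda>h. f (fst h)) (mset_set K) + image_mset (\<lambda>h. f (fst h)) (mset_set (H - K))"
    by simp
  also have "image_mset (\<lambda>h. f (fst h)) (mset_set K) = image_mset (\<lambda>h. i) (mset_set K)"
    by (rule image_mset_cong) (use fK assms(4) in \<open>auto simp: K_def H_def\<close>)
  also have "\<dots> = {#i, i#}" using cK by (simp add: image_mset_const_eq numeral_2_eq_2)
  also have "image_mset (\<lambda>h. f (fst h)) (mset_set (H - K)) = image_mset (\<lambda>h. r) (mset_set (H - K))"
    by (rule image_mset_cong) (use fH in \<open>auto simp: K_def\<close>)
  also have "\<dots> = replicate_mset (card H - 2) r"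
    using fH fK KH cK by (simp add: image_mset_const_eq card_Diff_subset)
  finally show "mset (lst E ends f v) = {#i, i#} + replicate_mset (deg E ends v - 2) r"
    by (simp add: mset_lst H_def deg_def)
qed



definition WW :: "nat \<Rightarrow> (nat \<Rightarrow> complex) \<Rightarrow> complex \<Rightarrow> 'v set \<Rightarrow> 'e::linorder set \<Rightarrow> ('e \<Rightarrow> 'v \<times> 'v) \<Rightarrow> ('e \<Rightarrow> nat) \<Rightarrow> complex" where
  "WW r x t V E ends f = (\<Prod>v\<in>V. thmA r x t (deg E ends v) (lst E ends f v))"

definition FF :: "'e set \<Rightarrow> ('e \<Rightarrow> 'v \<times> 'v) \<Rightarrow> nat \<Rightarrow> 'e set \<Rightarrow> ('e set \<Rightarrow> nat) \<Rightarrow> 'e \<Rightarrow> nat" where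
  "FF E ends r S \<kappa> = (\<lambda>e. if e \<in> E then (if e \<in> S then \<kappa> ((edge_adj ends S)\<^sup>+ `` {e}) else r) else undefined)"

lemma halfs_at_subset: "S \<subseteq> E \<Longrightarrow> halfs_at S ends v = {h \<in> halfs_at E ends v. fst h \<in> S}"
  by (auto simp: mem_halfs_at)

context
  fixes r :: nat and x :: "nat \<Rightarrow> complex" and t :: complex
    and V :: "'v set" and E :: "'e::linorder set" and ends :: "'e \<Rightarrow> 'v \<times> 'v"
  assumes r2: "r \<ge> 2"
    and mg: "multigraph V E ends"
    and degpos: "\<forall>v\<in>V. deg E ends v \<ge> 1"
begin

lemma fE: "finite E" and fV: "finite V" using mg by (auto simp: multigraph_def)

lemma hvertV: "fst h \<in> E \<Longrightarrow> hvert ends h \<in> V"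
  using mg by (auto simp: multigraph_def hvert_def)

lemma vertsV: "S \<subseteq> E \<Longrightarrow> verts ends S \<subseteq> V"
  using hvertV by (auto simp: verts_def)

lemma FF_PiE:
  assumes "S \<subseteq> E" "\<kappa> \<in> components ends S \<rightarrow>\<^sub>E {1..<r}"
  shows "FF E ends r S \<kappa> \<in> E \<rightarrow>\<^sub>E {1..r}"
proof -
  have "\<kappa> ((edge_adj ends S)\<^sup>+ `` {e}) \<in> {1..<r}" if "e \<in> S" for e
    using assms(2) comp_of_in[OF that] by blast
  thus ?thesis using r2 by (fastforce simp: FF_def)
qed

lemma FF_ne_r:
  assumes "S \<subseteq> E" "\<kappa> \<in> components ends S \<rightarrow>\<^sub>E {1..<r}" "e \<in> E"
  shows "(FF E ends r S \<kappa> e \<noteq> r) = (e \<in> S)"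
proof -
  have "\<kappa> ((edge_adj ends S)\<^sup>+ `` {e}) \<in> {1..<r}" if "e \<in> S" for e
    using assms(2) comp_of_in[OF that] by blast
  thus ?thesis using assms(3) by (auto simp: FF_def)
qed

lemma FF_inj: "inj_on (\<lambda>(S, \<kappa>). FF E ends r S \<kappa>)
   (SIGMA S:{S. is_cycle E ends S}. components ends S \<rightarrow>\<^sub>E {1..<r})"
proof (rule inj_onI)
  fix p q
  assume p: "p \<in> (SIGMA S:{S. is_cycle E ends S}. components ends S \<rightarrow>\<^sub>E {1..<r})"
    and q: "q \<in> (SIGMA S:{S. is_cycle E ends S}. components ends S \<rightarrow>\<^sub>E {1..<r})"
    and pq: "(\<lambda>(S, \<kappa>). FF E ends r S \<kappa>) p = (\<lambda>(S, \<kappa>). FF E ends r S \<kappa>) q"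
  obtain S \<kappa> S' \<kappa>' where pp: "p = (S, \<kappa>)" and qq: "q = (S', \<kappa>')" by fastforce
  have S: "is_cycle E ends S" "\<kappa> \<in> components ends S \<rightarrow>\<^sub>E {1..<r}" using p pp by auto
  have S': "is_cycle E ends S'" "\<kappa>' \<in> components ends S' \<rightarrow>\<^sub>E {1..<r}" using q qq by auto
  have eq: "FF E ends r S \<kappa> = FF E ends r S' \<kappa>'" using pq pp qq by simp
  have sub: "S \<subseteq> E" "S' \<subseteq> E" using S S' by (auto simp: is_cycle_def)
  have "S = {e \<in> E. FF E ends r S \<kappa> e \<noteq> r}" using FF_ne_r[OF sub(1) S(2)] sub by auto
  also have "\<dots> = S'" unfolding eq using FF_ne_r[OF sub(2) S'(2)] sub by auto
  finally have SS: "S = S'" .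
  have "\<kappa> = \<kappa>'"
  proof (rule PiE_ext[OF S(2)])
    show "\<kappa>' \<in> components ends S \<rightarrow>\<^sub>E {1..<r}" using S'(2) SS by simp
    fix C assume C: "C \<in> components ends S"
    then obtain e where e: "e \<in> C" using comps_nonempty by blast
    have eS: "e \<in> S" using e comps_sub[OF C] by blast
    have eE: "e \<in> E" using eS sub by blast
    have "\<kappa> C = FF E ends r S \<kappa> e" using comp_eq[OF C e] eS eE by (simp add: FF_def)
    also have "\<dots> = FF E ends r S' \<kappa>' e" using eq by simp
    also have "\<dots> = \<kappa>' C" using comp_eq[OF C e] eS eE SS by (simp add: FF_def)
    finally show "\<kappa> C = \<kappa>' C" .
  qed
  thus "p = q" using SS pp qq by simp
qed

lemma FF_value_zero:
  assumes S: "is_cycle E ends S" and k: "\<kappa> \<in> components ends S \<rightarrow>\<^sub>E {1..<r}"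
    and v: "v \<in> V" "v \<notin> verts ends S"
  shows "thmA r x t (deg E ends v) (lst E ends (FF E ends r S \<kappa>) v) = t"
proof (rule vertex_zero[OF fE _ r2])
  show "1 \<le> deg E ends v" using degpos v by blast
  have sub: "S \<subseteq> E" using S by (simp add: is_cycle_def)
  fix h assume h: "h \<in> halfs_at E ends v"
  have "fst h \<notin> S" using h v(2) by (auto simp: verts_def mem_halfs_at)
  thus "FF E ends r S \<kappa> (fst h) = r" using h by (auto simp: FF_def mem_halfs_at)
qed

lemma FF_value_two:
  assumes S: "is_cycle E ends S" and k: "\<kappa> \<in> components ends S \<rightarrow>\<^sub>E {1..<r}"
    and C: "C \<in> components ends S" and v: "v \<in> verts ends C"
  shows "thmA r x t (deg E ends v) (lst E ends (FF E ends r S \<kappa>) v) = x (\<kappa> C)"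
proof (rule vertex_two[OF fE])
  have sub: "S \<subseteq> E" using S by (simp add: is_cycle_def)
  have fS: "finite S" using sub fE finite_subset by metis
  show "\<kappa> C \<in> {1..<r}" using k C by blast
  have Ksub: "{h \<in> halfs_at E ends v. FF E ends r S \<kappa> (fst h) \<noteq> r} = halfs_at S ends v"
  proof -
    have "{h \<in> halfs_at E ends v. FF E ends r S \<kappa> (fst h) \<noteq> r} = {h \<in> halfs_at E ends v. fst h \<in> S}"
      using FF_ne_r[OF sub k] by (auto simp: mem_halfs_at)
    thus ?thesis using halfs_at_subset[OF sub, of ends v] by simp
  qed
  have vS: "v \<in> verts ends S" using v verts_Union[of ends S] C by blast
  have "deg S ends v = 2"
  proof -
    have "deg S ends v = 0 \<or> deg S ends v = 2" using S unfolding is_cycle_def by blast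
    thus ?thesis using deg_verts[OF fS vS] by linarith
  qed
  thus "card {h \<in> halfs_at E ends v. FF E ends r S \<kappa> (fst h) \<noteq> r} = 2"
    using Ksub by (simp add: deg_def)
  fix h assume h: "h \<in> halfs_at E ends v" "FF E ends r S \<kappa> (fst h) \<noteq> r"
  hence hS: "h \<in> halfs_at S ends v" using Ksub by blast
  hence "h \<in> halfs_at C ends v" using comp_halfs_eq[OF C v] by simp
  hence "fst h \<in> C" by (simp add: mem_halfs_at)
  hence "C = (edge_adj ends S)\<^sup>+ `` {fst h}" using comp_eq[OF C] by blast
  thus "FF E ends r S \<kappa> (fst h) = \<kappa> C" using hS sub by (auto simp: FF_def mem_halfs_at)
qed

lemma WW_FF:
  assumes S: "is_cycle E ends S" and k: "\<kappa> \<in> components ends S \<rightarrow>\<^sub>E {1..<r}"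
  shows "WW r x t V E ends (FF E ends r S \<kappa>) =
    t ^ (card V - card S) * (\<Prod>C\<in>components ends S. x (\<kappa> C) ^ card C)"
proof -
  define g where "g v = thmA r x t (deg E ends v) (lst E ends (FF E ends r S \<kappa>) v)" for v
  have sub: "S \<subseteq> E" using S by (simp add: is_cycle_def)
  have fS: "finite S" using sub fE finite_subset by metis
  have vV: "verts ends S \<subseteq> V" using vertsV[OF sub] .
  have "WW r x t V E ends (FF E ends r S \<kappa>) = prod g (V - verts ends S) * prod g (verts ends S)"
    unfolding WW_def g_def[symmetric] using prod.subset_diff[OF vV fV] by simp
  also have "prod g (V - verts ends S) = t ^ (card V - card S)"
  proof -
    have "prod g (V - verts ends S) = prod (\<lambda>_. t) (V - verts ends S)"
      using FF_value_zero[OF S k] by (auto simp: g_def intro!: prod.cong)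
    also have "\<dots> = t ^ (card V - card S)"
      using card_Diff_subset[OF finite_subset[OF vV fV] vV] cycle_card_verts[OF S fS] by simp
    finally show ?thesis .
  qed
  also have "prod g (verts ends S) = (\<Prod>C\<in>components ends S. prod g (verts ends C))"
    unfolding verts_Union[of ends S]
  proof (rule prod.UNION_disjoint)
    show "finite (components ends S)" using comps_finite[OF fS] .
    show "\<forall>C\<in>components ends S. finite (verts ends C)"
      using comps_sub fS finite_subset by (metis finite_half_edges finite_imageI verts_def)
    show "\<forall>C\<in>components ends S. \<forall>C'\<in>components ends S. C \<noteq> C' \<longrightarrow> verts ends C \<inter> verts ends C' = {}"
      using comp_verts_disj by blast
  qed
  also have "\<dots> = (\<Prod>C\<in>components ends S. x (\<kappa> C) ^ card C)"
  proof (rule prod.cong[OF refl])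
    fix C assume C: "C \<in> components ends S"
    have "prod g (verts ends C) = prod (\<lambda>_. x (\<kappa> C)) (verts ends C)"
      using FF_value_two[OF S k C] by (auto simp: g_def intro!: prod.cong)
    thus "prod g (verts ends C) = x (\<kappa> C) ^ card C"
      using comp_cycle_count[OF S fS C] by simp
  qed
  finally show ?thesis .
qed

lemma WW_nz_image:
  assumes f: "f \<in> E \<rightarrow>\<^sub>E {1..r}" and nz: "WW r x t V E ends f \<noteq> 0"
  shows "f \<in> (\<lambda>(S, \<kappa>). FF E ends r S \<kappa>) ` (SIGMA S:{S. is_cycle E ends S}. components ends S \<rightarrow>\<^sub>E {1..<r})"
proof -
  define S where "S = {e \<in> E. f e \<noteq> r}"
  have sub: "S \<subseteq> E" by (auto simp: S_def)
  have vnz: "thmA r x t (deg E ends v) (lst E ends f v) \<noteq> 0" if "v \<in> V" for v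
    using nz fV that by (auto simp: WW_def)
  have K: "halfs_at S ends v = {h \<in> halfs_at E ends v. f (fst h) \<noteq> r}" for v
    by (auto simp: S_def mem_halfs_at)
  have struct: "halfs_at S ends v = {} \<or> (\<exists>i\<in>{1..<r}. card (halfs_at S ends v) = 2 \<and>
      (\<forall>h\<in>halfs_at S ends v. f (fst h) = i))" if "v \<in> V" for v
    using vertex_nz[OF fE vnz[OF that]] K[of v] by simp
  have notV: "halfs_at S ends v = {}" if "v \<notin> V" for v
    using hvertV sub that by (auto simp: mem_halfs_at) blast
  have cyc: "is_cycle E ends S"
    unfolding is_cycle_def
  proof (intro conjI allI sub)
    fix v
    show "deg S ends v = 0 \<or> deg S ends v = 2"
    proof (cases "v \<in> V")
      case True
      thus ?thesis using struct[OF True] by (auto simp: deg_def)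
    next
      case False
      thus ?thesis using notV[OF False] by (simp add: deg_def)
    qed
  qed
  have adj: "f e = f e'" if ea: "(e, e') \<in> edge_adj ends S" for e e'
  proof -
    obtain a b where ab: "e \<in> S" "e' \<in> S" "hvert ends (e, a) = hvert ends (e', b)"
      using ea unfolding edge_adj_def by blast
    define v where "v = hvert ends (e, a)"
    have vV: "v \<in> V" using hvertV[of "(e, a)"] ab sub by (auto simp: v_def)
    have h1: "(e, a) \<in> halfs_at S ends v" using ab by (simp add: mem_halfs_at v_def)
    have h2: "(e', b) \<in> halfs_at S ends v" using ab by (simp add: mem_halfs_at v_def)
    from struct[OF vV] h1 obtain i where "\<forall>h\<in>halfs_at S ends v. f (fst h) = i" by blast
    hence "f (fst (e, a)) = i" "f (fst (e', b)) = i" using h1 h2 by blast+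
    thus ?thesis by simp
  qed
  have R: "f e = f e'" if "(e, e') \<in> (edge_adj ends S)\<^sup>+" for e e'
    using that by (induction rule: trancl_induct) (auto dest: adj)
  define \<kappa> where "\<kappa> = (\<lambda>C\<in>components ends S. f (SOME e. e \<in> C))"
  have \<kappa>: "\<kappa> \<in> components ends S \<rightarrow>\<^sub>E {1..<r}"
  proof -
    have "f (SOME e. e \<in> C) \<in> {1..<r}" if C: "C \<in> components ends S" for C
    proof -
      have "(SOME e. e \<in> C) \<in> C" using comps_nonempty[OF C] by (simp add: some_in_eq)
      hence "(SOME e. e \<in> C) \<in> S" using comps_sub[OF C] by blast
      hence "(SOME e. e \<in> C) \<in> E" "f (SOME e. e \<in> C) \<noteq> r" by (auto simp: S_def)
      moreover have "f (SOME e. e \<in> C) \<in> {1..r}" using f calculation(1) by blast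
      ultimately show ?thesis by auto
    qed
    thus ?thesis by (auto simp: \<kappa>_def)
  qed
  have "FF E ends r S \<kappa> = f"
  proof
    fix e
    show "FF E ends r S \<kappa> e = f e"
    proof (cases "e \<in> S")
      case True
      define e' where "e' = (SOME e'. e' \<in> (edge_adj ends S)\<^sup>+ `` {e})"
      have "e' \<in> (edge_adj ends S)\<^sup>+ `` {e}" unfolding e'_def using comp_of_mem[OF True]
        by (metis someI)
      hence "f e' = f e" using R by auto
      have eE: "e \<in> E" using True sub by blast
      have "FF E ends r S \<kappa> e = \<kappa> ((edge_adj ends S)\<^sup>+ `` {e})" using True eE by (simp add: FF_def)
      also have "\<dots> = f e'" using comp_of_in[of e S ends] True by (simp add: \<kappa>_def e'_def)
      finally show ?thesis using \<open>f e' = f e\<close> by simp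
    next
      case False
      show ?thesis
      proof (cases "e \<in> E")
        case True
        have "f e = r" using True False unfolding S_def by blast
        moreover have "FF E ends r S \<kappa> e = r" using True False by (simp add: FF_def)
        ultimately show ?thesis by simp
      next
        case F2: False
        have "f e = undefined" using f F2 by (rule PiE_arb)
        moreover have "FF E ends r S \<kappa> e = undefined" using F2 by (simp add: FF_def)
        ultimately show ?thesis by simp
      qed
    qed
  qed
  hence eqf: "f = (\<lambda>(S, \<kappa>). FF E ends r S \<kappa>) (S, \<kappa>)" by simp
  have mem: "(S, \<kappa>) \<in> (SIGMA S:{S. is_cycle E ends S}. components ends S \<rightarrow>\<^sub>E {1..<r})"
    using cyc \<kappa> by blast
  show ?thesis by (rule image_eqI[where x = "(S, \<kappa>)" and f = "\<lambda>(S, \<kappa>). FF E ends r S \<kappa>", OF eqf mem])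
qed

lemma finite_cyc: "finite {S. is_cycle E ends S}"
proof (rule finite_subset)
  show "{S. is_cycle E ends S} \<subseteq> Pow E" by (auto simp: is_cycle_def)
  show "finite (Pow E)" using fE by simp
qed

lemma mid: "(\<Sum>f\<in>E \<rightarrow>\<^sub>E {1..r}. WW r x t V E ends f) =
  (\<Sum>S\<in>{S. is_cycle E ends S}. t ^ (card V - card S) * (\<Prod>C\<in>components ends S. power_sum r x (card C)))"
proof -
  let ?Sig = "SIGMA S:{S. is_cycle E ends S}. components ends S \<rightarrow>\<^sub>E {1..<r}"
  let ?F = "\<lambda>(S, \<kappa>). FF E ends r S \<kappa>"
  have fcomp: "finite (components ends S)" if "is_cycle E ends S" for S
    using that fE comps_finite finite_subset unfolding is_cycle_def by metis
  have "(\<Sum>S\<in>{S. is_cycle E ends S}. t ^ (card V - card S) * (\<Prod>C\<in>components ends S. power_sum r x (card C)))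
     = (\<Sum>S\<in>{S. is_cycle E ends S}. \<Sum>\<kappa>\<in>components ends S \<rightarrow>\<^sub>E {1..<r}. WW r x t V E ends (FF E ends r S \<kappa>))"
  proof (rule sum.cong[OF refl])
    fix S assume S: "S \<in> {S. is_cycle E ends S}"
    have "(\<Prod>C\<in>components ends S. power_sum r x (card C))
        = (\<Sum>\<kappa>\<in>components ends S \<rightarrow>\<^sub>E {1..<r}. \<Prod>C\<in>components ends S. x (\<kappa> C) ^ card C)"
      unfolding power_sum_def using fcomp S by (simp add: prod_sum_PiE)
    thus "t ^ (card V - card S) * (\<Prod>C\<in>components ends S. power_sum r x (card C))
      = (\<Sum>\<kappa>\<in>components ends S \<rightarrow>\<^sub>E {1..<r}. WW r x t V E ends (FF E ends r S \<kappa>))"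
      using WW_FF S by (simp add: sum_distrib_left)
  qed
  also have "\<dots> = (\<Sum>p\<in>?Sig. WW r x t V E ends (?F p))"
    by (subst sum.Sigma) (use finite_cyc fcomp in \<open>auto simp: case_prod_unfold finite_PiE\<close>)
  also have "\<dots> = (\<Sum>f\<in>?F ` ?Sig. WW r x t V E ends f)"
    using sum.reindex[OF FF_inj, of "WW r x t V E ends"] by (simp add: comp_def)
  also have "\<dots> = (\<Sum>f\<in>E \<rightarrow>\<^sub>E {1..r}. WW r x t V E ends f)"
  proof (rule sum.mono_neutral_left)
    show "finite (E \<rightarrow>\<^sub>E {1..r})" using fE by (simp add: finite_PiE)
    show "?F ` ?Sig \<subseteq> E \<rightarrow>\<^sub>E {1..r}" using FF_PiE by (auto simp: is_cycle_def)
    show "\<forall>f\<in>(E \<rightarrow>\<^sub>E {1..r}) - ?F ` ?Sig. WW r x t V E ends f = 0"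
      using WW_nz_image by blast
  qed
  finally show ?thesis by simp
qed

end


lemma size_le_summ: "0 \<notin># (M :: nat multiset) \<Longrightarrow> size M \<le> sum_mset M"
  by (induction M) auto

lemma mem_le_summ: "(a :: nat) \<in># M \<Longrightarrow> a \<le> sum_mset M"
  by (induction M) auto

lemma finite_partitions: "finite (partitions_upto n)"
proof (rule finite_subset)
  show "partitions_upto n \<subseteq> (\<Union>k\<in>{0..n}. multisets_of_size {0..n} k)"
  proof
    fix M assume "M \<in> partitions_upto n"
    hence M: "0 \<notin># M" "sum_mset M \<le> n" by (auto simp: partitions_upto_def)
    have "size M \<le> n" using size_le_summ[OF M(1)] M(2) by linarith
    moreover have "set_mset M \<subseteq> {0..n}" using mem_le_summ M(2) by fastforce
    ultimately show "M \<in> (\<Union>k\<in>{0..n}. multisets_of_size {0..n} k)"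
      by (auto simp: multisets_of_size_def)
  qed
  show "finite (\<Union>k\<in>{0..n}. multisets_of_size {0..n} k)" by auto
qed

lemma rhs_eq:
  assumes fE: "finite E" and fV: "finite V" and vV: "\<And>S. is_cycle E ends S \<Longrightarrow> card S \<le> card V"
  shows "(\<Sum>lam \<in> partitions_upto (card V).
       t ^ (card V - sum_mset lam) * power_sum_part r x lam * of_nat (N_count E ends lam))
    = (\<Sum>S\<in>{S. is_cycle E ends S}. t ^ (card V - card S) * power_sum_part r x (cycle_type ends S))"
proof -
  have fc: "finite {S. is_cycle E ends S}"
  proof (rule finite_subset)
    show "{S. is_cycle E ends S} \<subseteq> Pow E" by (auto simp: is_cycle_def)
    show "finite (Pow E)" using fE by simp
  qed
  have fS: "finite S" if "is_cycle E ends S" for S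
    using that fE finite_subset unfolding is_cycle_def by metis
  have img: "cycle_type ends ` {S. is_cycle E ends S} \<subseteq> partitions_upto (card V)"
  proof
    fix lam assume "lam \<in> cycle_type ends ` {S. is_cycle E ends S}"
    then obtain S where S: "is_cycle E ends S" "lam = cycle_type ends S" by blast
    show "lam \<in> partitions_upto (card V)"
      using S type_pos[OF fS[OF S(1)], of ends] type_sum[OF fS[OF S(1)], of ends] vV[OF S(1)]
      by (auto simp: partitions_upto_def)
  qed
  have "(\<Sum>S\<in>{S. is_cycle E ends S}. t ^ (card V - card S) * power_sum_part r x (cycle_type ends S))
    = (\<Sum>lam\<in>partitions_upto (card V). \<Sum>S\<in>{S. S \<in> {S. is_cycle E ends S} \<and> cycle_type ends S = lam}.
         t ^ (card V - card S) * power_sum_part r x (cycle_type ends S))"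
    by (rule sum.group[OF fc finite_partitions img, symmetric])
  also have "\<dots> = (\<Sum>lam \<in> partitions_upto (card V).
       t ^ (card V - sum_mset lam) * power_sum_part r x lam * of_nat (N_count E ends lam))"
  proof (rule sum.cong[OF refl])
    fix lam
    have "(\<Sum>S\<in>{S. S \<in> {S. is_cycle E ends S} \<and> cycle_type ends S = lam}.
         t ^ (card V - card S) * power_sum_part r x (cycle_type ends S))
      = (\<Sum>S\<in>{S. is_cycle E ends S \<and> cycle_type ends S = lam}. t ^ (card V - sum_mset lam) * power_sum_part r x lam)"
      by (rule sum.cong) (auto simp: type_sum fS)
    thus "(\<Sum>S\<in>{S. S \<in> {S. is_cycle E ends S} \<and> cycle_type ends S = lam}.
         t ^ (card V - card S) * power_sum_part r x (cycle_type ends S))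
      = t ^ (card V - sum_mset lam) * power_sum_part r x lam * of_nat (N_count E ends lam)"
      by (simp add: N_count_def)
  qed
  finally show ?thesis by simp
qed

definition lift :: "'e set \<Rightarrow> ('e \<Rightarrow> nat) \<Rightarrow> 'e \<times> bool \<Rightarrow> nat" where
  "lift E f = (\<lambda>h. if h \<in> half_edges E then f (fst h) else undefined)"

lemma lhs_eq:
  assumes fE: "finite E"
  shows "graph_fun r A identity_mat V E ends =
    (\<Sum>f\<in>E \<rightarrow>\<^sub>E {1..r}. \<Prod>v\<in>V. A (deg E ends v) (lst E ends f v))"
proof -
  define G where "G c = (\<Prod>e\<in>E. identity_mat (c (e, False)) (c (e, True))) *
        (\<Prod>v\<in>V. A (deg E ends v) (map c (sorted_list_of_set (halfs_at E ends v))))" for c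
  let ?P = "Pi\<^sub>E (half_edges E) (\<lambda>_. {1..r})"
  have sub: "lift E ` (E \<rightarrow>\<^sub>E {1..r}) \<subseteq> ?P"
    by (auto simp: lift_def PiE_def Pi_def extensional_def)
  have inj: "inj_on (lift E) (E \<rightarrow>\<^sub>E {1..r})"
  proof (rule inj_onI)
    fix f g assume f: "f \<in> E \<rightarrow>\<^sub>E {1..r}" and g: "g \<in> E \<rightarrow>\<^sub>E {1..r}" and eq: "lift E f = lift E g"
    show "f = g"
    proof (rule PiE_ext[OF f g])
      fix e assume "e \<in> E"
      hence "lift E f (e, False) = f e" "lift E g (e, False) = g e" by (auto simp: lift_def)
      thus "f e = g e" using eq by metis
    qed
  qed
  have zero: "G c = 0" if c: "c \<in> ?P - lift E ` (E \<rightarrow>\<^sub>E {1..r})" for c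
  proof -
    have "\<exists>e\<in>E. c (e, False) \<noteq> c (e, True)"
    proof (rule ccontr)
      assume "\<not> (\<exists>e\<in>E. c (e, False) \<noteq> c (e, True))"
      hence all: "\<forall>e\<in>E. c (e, False) = c (e, True)" by blast
      define f where "f = (\<lambda>e. if e \<in> E then c (e, False) else undefined)"
      have fP: "f \<in> E \<rightarrow>\<^sub>E {1..r}" using c by (auto simp: f_def PiE_def Pi_def extensional_def)
      have lf: "lift E f = c"
      proof
        fix h
        show "lift E f h = c h"
        proof (cases "h \<in> half_edges E")
          case True
          obtain e b where h: "h = (e, b)" by fastforce
          have "e \<in> E" using True h by simp
          thus ?thesis using all h True by (cases b) (auto simp: lift_def f_def)
        next
          case False
          have cP: "c \<in> ?P" using c by blast
          have "c h = undefined" by (rule PiE_arb[OF cP False])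
          thus ?thesis using False by (simp add: lift_def)
        qed
      qed
      have "c \<in> lift E ` (E \<rightarrow>\<^sub>E {1..r})" by (rule image_eqI[where f = "lift E", OF sym[OF lf] fP])
      thus False using c by blast
    qed
    then obtain e where "e \<in> E" "identity_mat (c (e, False)) (c (e, True)) = 0"
      by (auto simp: identity_mat_def)
    hence "(\<Prod>e\<in>E. identity_mat (c (e, False)) (c (e, True))) = 0" using fE
      by (metis prod_zero_iff)
    thus ?thesis by (simp add: G_def)
  qed
  have "graph_fun r A identity_mat V E ends = sum G ?P"
    by (simp add: graph_fun_def G_def)
  also have "\<dots> = sum G (lift E ` (E \<rightarrow>\<^sub>E {1..r}))"
    by (rule sum.mono_neutral_right[OF _ sub]) (use fE zero in \<open>auto simp: finite_PiE\<close>)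
  also have "\<dots> = sum (G \<circ> lift E) (E \<rightarrow>\<^sub>E {1..r})" by (rule sum.reindex[OF inj])
  also have "\<dots> = (\<Sum>f\<in>E \<rightarrow>\<^sub>E {1..r}. \<Prod>v\<in>V. A (deg E ends v) (lst E ends f v))"
  proof (rule sum.cong[OF refl])
    fix f assume "f \<in> E \<rightarrow>\<^sub>E {1..r}"
    have "(\<Prod>e\<in>E. identity_mat (lift E f (e, False)) (lift E f (e, True))) = 1"
      by (rule prod.neutral) (simp add: lift_def identity_mat_def)
    moreover have "map (lift E f) (sorted_list_of_set (halfs_at E ends v)) = lst E ends f v" for v
      unfolding lst_def using fE by (intro map_cong refl) (auto simp: lift_def mem_halfs_at)
    ultimately show "(G \<circ> lift E) f = (\<Prod>v\<in>V. A (deg E ends v) (lst E ends f v))"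
      by (simp add: G_def)
  qed
  finally show ?thesis .
qed


theorem theorem2:
  fixes r :: nat and x :: "nat \<Rightarrow> complex" and t :: complex
    and V :: "'v set" and E :: "'e::linorder set" and ends :: "'e \<Rightarrow> 'v \<times> 'v"
  assumes "r \<ge> 2"
    and "multigraph V E ends"
    and "\<forall>v\<in>V. deg E ends v \<ge> 1"
  shows "graph_fun r (thmA r x t) identity_mat V E ends =
    (\<Sum>lam \<in> partitions_upto (card V).
       t ^ (card V - sum_mset lam) * power_sum_part r x lam * of_nat (N_count E ends lam))"
proof -
  have fE: "finite E" and fV: "finite V" using assms(2) by (auto simp: multigraph_def)
  have fS: "finite S" if "is_cycle E ends S" for S
    using that fE finite_subset unfolding is_cycle_def by metis
  have vV: "card S \<le> card V" if S: "is_cycle E ends S" for S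
  proof -
    have "S \<subseteq> E" using S by (simp add: is_cycle_def)
    hence "verts ends S \<subseteq> V" using vertsV[OF assms] by blast
    hence "card (verts ends S) \<le> card V" using fV by (rule card_mono[rotated])
    thus ?thesis using cycle_card_verts[OF S fS[OF S]] by simp
  qed
  have "graph_fun r (thmA r x t) identity_mat V E ends = (\<Sum>f\<in>E \<rightarrow>\<^sub>E {1..r}. WW r x t V E ends f)"
    unfolding WW_def by (rule lhs_eq[OF fE])
  also have "\<dots> = (\<Sum>S\<in>{S. is_cycle E ends S}. t ^ (card V - card S) *
      (\<Prod>C\<in>components ends S. power_sum r x (card C)))"
    by (rule mid[OF assms])
  also have "\<dots> = (\<Sum>S\<in>{S. is_cycle E ends S}. t ^ (card V - card S) * power_sum_part r x (cycle_type ends S))"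
    by (rule sum.cong[OF refl]) (simp add: type_psp fS)
  also have "\<dots> = (\<Sum>lam \<in> partitions_upto (card V).
       t ^ (card V - sum_mset lam) * power_sum_part r x lam * of_nat (N_count E ends lam))"
    by (rule rhs_eq[OF fE fV vV, symmetric])
  finally show ?thesis .
qed

end
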